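(* Let $x,y>0$ with $x\ne y$, and define for $t\in(-\min\{x,y\},\infty)$ \[ G_{x,y}(t)=G(x+t,y+t)=\sqrt{(x+t)(y+t)}\,. \] Then $G_{x,y}(t)$ is a Bernstein function of $t$ on $(-\min\{x,y\},\infty)$.
   Context: For positive numbers $a,b$, the geometric mean is $G(a,b)=\sqrt{ab}$. A function $f$ on an interval $I\subseteq\mathbb{R}$ is completely monotonic on $I$ if it has derivatives of all orders on $I$ and $(-1)^n f^{(n)}(t)\ge 0$ for all $t\in I$ and all integers $n\ge0$. A function $f:I\to[0,\infty)$ is a Bernstein function on $I$ if it has derivatives of all orders and $f'$ is completely monotonic on $I$. *)

theory Defs
  imports "HOL-Analysis.Analysis"
begin

definition nth_deriv :: "nat \<Rightarrow> (real \<Rightarrow> real) \<Rightarrow> real \<Rightarrow> real" where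
  "nth_deriv n f = (deriv ^^ n) f"

definition smooth_on :: "real set \<Rightarrow> (real \<Rightarrow> real) \<Rightarrow> bool" where
  "smooth_on I f \<longleftrightarrow> (\<forall>n. \<forall>t\<in>I. nth_deriv n f differentiable (at t))"

definition completely_monotonic_on :: "real set \<Rightarrow> (real \<Rightarrow> real) \<Rightarrow> bool" where
  "completely_monotonic_on I f \<longleftrightarrow>
     smooth_on I f \<and> (\<forall>n. \<forall>t\<in>I. (-1) ^ n * nth_deriv n f t \<ge> 0)"

definition bernstein_on :: "real set \<Rightarrow> (real \<Rightarrow> real) \<Rightarrow> bool" where
  "bernstein_on I f \<longleftrightarrow>
     (\<forall>t\<in>I. f t \<ge> 0) \<and> smooth_on I f \<and> completely_monotonic_on I (deriv f)"

end

theory Submission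
  imports Defs
begin

fun TT :: "real \<Rightarrow> real \<Rightarrow> (real \<times> real \<times> real) list \<Rightarrow> real \<Rightarrow> real" where
  "TT x y [] t = 0"
| "TT x y ((c,p,q)#cs) t = c * (x+t) powr p * (y+t) powr q + TT x y cs t"

fun DD :: "(real \<times> real \<times> real) list \<Rightarrow> (real \<times> real \<times> real) list" where
  "DD [] = []"
| "DD ((c,p,q)#cs) = (c*p, p-1, q) # (c*q, p, q-1) # DD cs"

lemma TT_deriv:
  assumes "x + t > 0" "y + t > 0"
  shows "(TT x y cs has_real_derivative TT x y (DD cs) t) (at t)"
  using assms
proof (induction cs)
  case Nil
  then show ?case by simp
next
  case (Cons a cs)
  obtain c p q where a: "a = (c,p,q)" by (cases a) auto
  have d1: "((\<lambda>t. (x+t) powr p) has_real_derivative p * (x+t) powr (p-1)) (at t)"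
    using DERIV_fun_powr[of "\<lambda>t. x+t" 1 t p] Cons.prems by (auto intro!: derivative_eq_intros)
  have d2: "((\<lambda>t. (y+t) powr q) has_real_derivative q * (y+t) powr (q-1)) (at t)"
    using DERIV_fun_powr[of "\<lambda>t. y+t" 1 t q] Cons.prems by (auto intro!: derivative_eq_intros)
  have "((\<lambda>t. c * (x+t) powr p * (y+t) powr q + TT x y cs t) has_real_derivative
     c * (p * (x+t) powr (p-1)) * (y+t) powr q + c * (x+t) powr p * (q * (y+t) powr (q-1))
      + TT x y (DD cs) t) (at t)"
    using DERIV_add[OF DERIV_mult[OF DERIV_cmult[OF d1, of c] d2] Cons.IH[OF Cons.prems]]
    by (simp add: algebra_simps)
  moreover have "(\<lambda>t. c * (x+t) powr p * (y+t) powr q + TT x y cs t) = TT x y (a#cs)"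
    by (auto simp: a)
  ultimately show ?case by (simp add: a algebra_simps)
qed

lemma nth_deriv_Suc: "nth_deriv (Suc n) f = nth_deriv n (deriv f)"
  unfolding nth_deriv_def by (simp add: funpow_Suc_right del: funpow.simps)

lemma nth_deriv_add: "nth_deriv (n + m) f = nth_deriv n (nth_deriv m f)"
  unfolding nth_deriv_def by (simp add: funpow_add)

lemma TT_nth:
  assumes S: "S = {- min x y<..}"
  shows "(\<forall>t\<in>S. f t = TT x y cs t) \<Longrightarrow> t \<in> S \<Longrightarrow> nth_deriv n f t = TT x y ((DD ^^ n) cs) t"
proof (induction n arbitrary: f cs)
  case 0
  then show ?case by (simp add: nth_deriv_def)
next
  case (Suc n)
  have op: "open S" using S by simp
  have "\<forall>s\<in>S. deriv f s = TT x y (DD cs) s"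
  proof
    fix s assume s: "s \<in> S"
    have "x + s > 0" "y + s > 0" using s S by auto
    hence "(TT x y cs has_real_derivative TT x y (DD cs) s) (at s)" by (rule TT_deriv)
    hence "(f has_real_derivative TT x y (DD cs) s) (at s)"
      by (rule has_field_derivative_transform_within_open[OF _ op s]) (use Suc.prems in auto)
    thus "deriv f s = TT x y (DD cs) s" by (rule DERIV_imp_deriv)
  qed
  from Suc.IH[OF this Suc.prems(2)] show ?case
    by (simp add: nth_deriv_Suc funpow_Suc_right del: funpow.simps)
qed

lemma TT_nth_diff:
  assumes S: "S = {- min x y<..}" and eq: "\<forall>t\<in>S. f t = TT x y cs t" and t: "t \<in> S"
  shows "nth_deriv n f differentiable (at t)"
proof -
  have op: "open S" using S by simp
  have "x + t > 0" "y + t > 0" using t S by auto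
  hence "(TT x y ((DD ^^ n) cs) has_real_derivative TT x y (DD ((DD ^^ n) cs)) t) (at t)"
    by (rule TT_deriv)
  hence "(nth_deriv n f has_real_derivative TT x y (DD ((DD ^^ n) cs)) t) (at t)"
    by (rule has_field_derivative_transform_within_open[OF _ op t])
       (use TT_nth[OF S eq] in auto)
  thus ?thesis using real_differentiable_def by blast
qed

definition Inv :: "real \<Rightarrow> (real \<times> real \<times> real) list \<Rightarrow> bool" where
  "Inv s cs \<longleftrightarrow> (\<forall>(c,p,q)\<in>set cs. p \<le> 0 \<and> q \<le> 0 \<and> s * c \<ge> 0)"

lemma Inv_DD: "Inv s cs \<Longrightarrow> Inv (-s) (DD cs)"
proof (induction cs)
  case Nil
  then show ?case by (simp add: Inv_def)
next
  case (Cons a cs)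
  obtain c p q where a: "a = (c,p,q)" by (cases a) auto
  have h: "p \<le> 0" "q \<le> 0" "s * c \<ge> 0" "Inv s cs" using Cons.prems by (auto simp: Inv_def a)
  have "- s * (c * p) \<ge> 0" using mult_nonneg_nonneg[OF h(3), of "-p"] h by (simp add: algebra_simps)
  moreover have "- s * (c * q) \<ge> 0" using mult_nonneg_nonneg[OF h(3), of "-q"] h by (simp add: algebra_simps)
  ultimately show ?case using Cons.IH[OF h(4)] h by (auto simp: Inv_def a)
qed

lemma Inv_DDn: "Inv s cs \<Longrightarrow> Inv ((-1)^n * s) ((DD ^^ n) cs)"
  by (induction n) (auto dest: Inv_DD)

lemma TT_sign: "\<forall>(c,p,q)\<in>set cs. s * c \<ge> 0 \<Longrightarrow> s * TT x y cs t \<ge> 0"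
proof (induction cs)
  case Nil
  then show ?case by simp
next
  case (Cons a cs)
  obtain c p q where a: "a = (c,p,q)" by (cases a) auto
  have "s * c \<ge> 0" using Cons.prems a by auto
  hence "s * c * ((x+t) powr p * (y+t) powr q) \<ge> 0" by simp
  moreover have "s * TT x y cs t \<ge> 0" using Cons by auto
  ultimately show ?case by (simp add: a algebra_simps)
qed

theorem theorem4p1:
  fixes x y :: real
  assumes "x > 0" and "y > 0" and "x \<noteq> y"
  shows "bernstein_on {- min x y<..} (\<lambda>t. sqrt ((x + t) * (y + t)))"
proof -
  define S where "S = {- min x y<..}"
  define G where "G = (\<lambda>t. sqrt ((x + t) * (y + t)))"
  define c0 where "c0 = [(1::real, 1/2::real, 1/2::real)]"
  define k where "k = -(((x::real)-y)^2)/4"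
  have eq0: "\<forall>t\<in>S. G t = TT x y c0 t"
  proof
    fix t assume "t \<in> S"
    hence "x + t > 0" "y + t > 0" by (auto simp: S_def)
    thus "G t = TT x y c0 t"
      by (simp add: G_def c0_def powr_half_sqrt powr_mult[symmetric] real_sqrt_mult)
  qed
  have sm: "smooth_on S G"
    unfolding smooth_on_def using TT_nth_diff[OF S_def eq0] by blast
  have smd: "smooth_on S (deriv G)"
    unfolding smooth_on_def using TT_nth_diff[OF S_def eq0] by (metis nth_deriv_Suc)
  have eq2: "\<forall>t\<in>S. nth_deriv 2 G t = TT x y [(k, -3/2, -3/2)] t"
  proof
    fix t assume t: "t \<in> S"
    hence a: "x + t > 0" "y + t > 0" by (auto simp: S_def)
    define A where "A = (x+t) powr (-3/2)"
    define B where "B = (y+t) powr (-3/2)"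
    have pw: "a powr (1/2) = a powr (-3/2) * a^2" "a powr (-1/2) = a powr (-3/2) * a"
      if "a > 0" for a :: real
    proof -
      have "a powr (1/2) = a powr (-3/2 + 2)" by simp
      also have "\<dots> = a powr (-3/2) * a^2" using that by (simp only: powr_add powr_numeral)
      finally show "a powr (1/2) = a powr (-3/2) * a^2" .
      have "a powr (-1/2) = a powr (-3/2 + 1)" by simp
      also have "\<dots> = a powr (-3/2) * a" using that by (subst powr_add) simp
      finally show "a powr (-1/2) = a powr (-3/2) * a" .
    qed
    have D2: "(DD^^2) c0 = [(-1/4, -3/2, 1/2), (1/4,-1/2,-1/2),(1/4,-1/2,-1/2),(-1/4,1/2,-3/2)]"
      by (simp add: c0_def numeral_2_eq_2)
    have alg: "-1/4 * A * (B*b^2) + 1/4*(A*a)*(B*b) + (1/4*(A*a)*(B*b) + (-1/4*(A*a^2)*B + 0))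
       = -((a-b)^2)/4*A*B" for a b :: real
      by (simp add: power2_eq_square algebra_simps)
    have "nth_deriv 2 G t = TT x y ((DD ^^ 2) c0) t" by (rule TT_nth[OF S_def eq0 t])
    also have "\<dots> = -1/4 * A * (B*(y+t)^2) + 1/4*(A*(x+t))*(B*(y+t)) + (1/4*(A*(x+t))*(B*(y+t)) + (-1/4*(A*(x+t)^2)*B + 0))"
      unfolding D2 TT.simps A_def B_def pw[OF a(1)] pw[OF a(2)] by simp
    also have "\<dots> = TT x y [(k, -3/2, -3/2)] t"
      unfolding alg by (simp add: k_def A_def B_def)
    finally show "nth_deriv 2 G t = TT x y [(k, -3/2, -3/2)] t" .
  qed
  have cm: "\<forall>n. \<forall>t\<in>S. (-1) ^ n * nth_deriv n (deriv G) t \<ge> 0"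
  proof (intro allI ballI)
    fix n t assume t: "t \<in> S"
    show "(-1) ^ n * nth_deriv n (deriv G) t \<ge> 0"
    proof (cases n)
      case 0
      have "nth_deriv n (deriv G) t = TT x y (DD c0) t"
        using TT_nth[OF S_def eq0 t, of 1] 0 by (simp add: nth_deriv_Suc[of 0, symmetric])
      moreover have "1 * TT x y (DD c0) t \<ge> 0"
        by (rule TT_sign) (auto simp: c0_def)
      ultimately show ?thesis using 0 by simp
    next
      case (Suc m)
      have "nth_deriv n (deriv G) t = nth_deriv (m + 2) G t"
        using Suc by (simp add: nth_deriv_Suc[symmetric])
      also have "\<dots> = nth_deriv m (nth_deriv 2 G) t" by (simp only: nth_deriv_add)
      also have "\<dots> = TT x y ((DD ^^ m) [(k, -3/2, -3/2)]) t"
        by (rule TT_nth[OF S_def eq2 t])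
      finally have e: "nth_deriv n (deriv G) t = TT x y ((DD ^^ m) [(k, -3/2, -3/2)]) t" .
      have "k \<le> 0" by (simp add: k_def)
      hence "Inv (-1) [(k, -3/2, -3/2)]" by (simp add: Inv_def)
      from Inv_DDn[OF this, of m]
      have "Inv ((-1)^n) ((DD ^^ m) [(k, -3/2, -3/2)])" using Suc by simp
      hence "(-1)^n * TT x y ((DD ^^ m) [(k, -3/2, -3/2)]) t \<ge> 0"
        by (intro TT_sign) (auto simp: Inv_def)
      thus ?thesis using e by simp
    qed
  qed
  show ?thesis
    unfolding bernstein_on_def completely_monotonic_on_def
    using sm smd cm by (simp add: S_def[symmetric] G_def[symmetric]) (auto simp: S_def)
qed

end
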